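(* Let $G=K\rtimes_\phi H$ be a finite Frobenius group with kernel $K$ and complement $H$, and suppose $K$ is abelian. Then $\mathrm{Aut}(G)\cong K\rtimes N_{\mathrm{Aut}(K)}(\phi(H))$, which is a subgroup of the holomorph $\mathrm{Hol}(K)=K\rtimes\mathrm{Aut}(K)$ (with $\mathrm{Aut}(K)$ acting naturally on $K$).
   Context: A finite group $G=K\rtimes_\phi H$ with $K,H$ nontrivial is a Frobenius group with kernel $K$ and complement $H$ if for every $h\in H$, $h\neq1$, the automorphism $\phi(h)$ fixes no nonidentity element of $K$. $N_{\mathrm{Aut}(K)}(\phi(H))$ is the normalizer of $\phi(H)$ in $\mathrm{Aut}(K)$. *)

theory Defs
  imports "HOL-Algebra.Algebra"
begin

definition semidirect_product ::
  "('k, 'a) monoid_scheme \<Rightarrow> ('h, 'b) monoid_scheme \<Rightarrow> ('h \<Rightarrow> 'k \<Rightarrow> 'k) \<Rightarrow> ('k \<times> 'h) monoid"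
  where "semidirect_product K H alpha =
    \<lparr> carrier = carrier K \<times> carrier H,
      monoid.mult = (\<lambda>(k1, h1) (k2, h2). (k1 \<otimes>\<^bsub>K\<^esub> alpha h1 k2, h1 \<otimes>\<^bsub>H\<^esub> h2)),
      one = (\<one>\<^bsub>K\<^esub>, \<one>\<^bsub>H\<^esub>) \<rparr>"

definition holomorph :: "('k, 'a) monoid_scheme \<Rightarrow> ('k \<times> ('k \<Rightarrow> 'k)) monoid"
  where "holomorph K = semidirect_product K (AutoGroup K) (\<lambda>a. a)"

definition frobenius_action ::
  "('k, 'a) monoid_scheme \<Rightarrow> ('h, 'b) monoid_scheme \<Rightarrow> ('h \<Rightarrow> 'k \<Rightarrow> 'k) \<Rightarrow> bool"
  where "frobenius_action K H phi \<longleftrightarrow>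
    carrier K \<noteq> {\<one>\<^bsub>K\<^esub>} \<and> carrier H \<noteq> {\<one>\<^bsub>H\<^esub>} \<and>
    (\<forall>h \<in> carrier H. h \<noteq> \<one>\<^bsub>H\<^esub> \<longrightarrow>
       (\<forall>k \<in> carrier K. phi h k = k \<longrightarrow> k = \<one>\<^bsub>K\<^esub>))"

end

theory Submission
  imports Defs
begin

locale sdp = K: group K + H: group H
  for K :: "('k,'a) monoid_scheme" and H :: "('h,'b) monoid_scheme" +
  fixes alpha :: "'h \<Rightarrow> 'k \<Rightarrow> 'k"
  assumes al_hom: "alpha \<in> hom H (AutoGroup K)"
begin

abbreviation "G \<equiv> semidirect_product K H alpha"

lemma gh: "group_hom H (AutoGroup K) alpha"
  by (simp add: group_hom.intro group_hom_axioms.intro H.group_axioms K.AutoGroup al_hom)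

lemma al_auto: "h \<in> carrier H \<Longrightarrow> alpha h \<in> auto K"
  using al_hom by (auto simp: hom_def AutoGroup_def)

lemma al_Bij: "h \<in> carrier H \<Longrightarrow> alpha h \<in> Bij (carrier K)"
  using al_auto by (auto simp: auto_def)

lemma al_homK: "h \<in> carrier H \<Longrightarrow> alpha h \<in> hom K K"
  using al_auto by (auto simp: auto_def)

lemma al_closed [simp]: "h \<in> carrier H \<Longrightarrow> x \<in> carrier K \<Longrightarrow> alpha h x \<in> carrier K"
  using al_homK by (auto simp: hom_def)

lemma al_mult [simp]: "h \<in> carrier H \<Longrightarrow> x \<in> carrier K \<Longrightarrow> y \<in> carrier K \<Longrightarrow>
   alpha h (x \<otimes>\<^bsub>K\<^esub> y) = alpha h x \<otimes>\<^bsub>K\<^esub> alpha h y"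
  using al_homK by (auto simp: hom_def)

lemma al_ext: "h \<in> carrier H \<Longrightarrow> x \<notin> carrier K \<Longrightarrow> alpha h x = undefined"
  using al_Bij by (auto simp: Bij_def extensional_def)

lemma al_bij: "h \<in> carrier H \<Longrightarrow> bij_betw (alpha h) (carrier K) (carrier K)"
  using al_Bij by (auto simp: Bij_def)

lemma al_comp: "h1 \<in> carrier H \<Longrightarrow> h2 \<in> carrier H \<Longrightarrow> x \<in> carrier K \<Longrightarrow>
   alpha (h1 \<otimes>\<^bsub>H\<^esub> h2) x = alpha h1 (alpha h2 x)"
proof -
  assume a: "h1 \<in> carrier H" "h2 \<in> carrier H" "x \<in> carrier K"
  have "alpha (h1 \<otimes>\<^bsub>H\<^esub> h2) = alpha h1 \<otimes>\<^bsub>AutoGroup K\<^esub> alpha h2"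
    using al_hom a by (auto simp: hom_def)
  also have "\<dots> = compose (carrier K) (alpha h1) (alpha h2)"
    using al_Bij a by (simp add: AutoGroup_def BijGroup_def)
  finally show ?thesis using a by (simp add: compose_def)
qed

lemma al_one: "x \<in> carrier K \<Longrightarrow> alpha \<one>\<^bsub>H\<^esub> x = x"
proof -
  assume a: "x \<in> carrier K"
  have "alpha \<one>\<^bsub>H\<^esub> = \<one>\<^bsub>AutoGroup K\<^esub>" using gh group_hom.hom_one by blast
  then show ?thesis using a by (simp add: AutoGroup_def BijGroup_def)
qed

lemma al_oneK [simp]: "h \<in> carrier H \<Longrightarrow> alpha h \<one>\<^bsub>K\<^esub> = \<one>\<^bsub>K\<^esub>"
  using al_homK K.group_axioms by (metis group_hom.hom_one group_hom.intro group_hom_axioms.intro)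

lemma al_invK [simp]: "h \<in> carrier H \<Longrightarrow> x \<in> carrier K \<Longrightarrow> alpha h (inv\<^bsub>K\<^esub> x) = inv\<^bsub>K\<^esub> (alpha h x)"
  using al_homK K.group_axioms by (metis group_hom.hom_inv group_hom.intro group_hom_axioms.intro)

lemma al_powK [simp]: "h \<in> carrier H \<Longrightarrow> x \<in> carrier K \<Longrightarrow> alpha h (x [^]\<^bsub>K\<^esub> (n::nat)) = (alpha h x) [^]\<^bsub>K\<^esub> n"
  by (induction n) auto

lemma al_inv_cancel: "h \<in> carrier H \<Longrightarrow> x \<in> carrier K \<Longrightarrow> alpha (inv\<^bsub>H\<^esub> h) (alpha h x) = x"
  using al_comp[of "inv\<^bsub>H\<^esub> h" h x] by (simp add: al_one)

lemma al_inv_cancel2: "h \<in> carrier H \<Longrightarrow> x \<in> carrier K \<Longrightarrow> alpha h (alpha (inv\<^bsub>H\<^esub> h) x) = x"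
  using al_comp[of h "inv\<^bsub>H\<^esub> h" x] by (simp add: al_one)

lemma G_carrier [simp]: "carrier G = carrier K \<times> carrier H"
  by (simp add: semidirect_product_def)

lemma G_mult [simp]: "(k1, h1) \<otimes>\<^bsub>G\<^esub> (k2, h2) = (k1 \<otimes>\<^bsub>K\<^esub> alpha h1 k2, h1 \<otimes>\<^bsub>H\<^esub> h2)"
  by (simp add: semidirect_product_def)

lemma G_one [simp]: "\<one>\<^bsub>G\<^esub> = (\<one>\<^bsub>K\<^esub>, \<one>\<^bsub>H\<^esub>)"
  by (simp add: semidirect_product_def)

lemma G_group: "group G"
proof (rule groupI)
  fix x y assume "x \<in> carrier G" "y \<in> carrier G"
  then show "x \<otimes>\<^bsub>G\<^esub> y \<in> carrier G" by (cases x, cases y) auto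
next
  show "\<one>\<^bsub>G\<^esub> \<in> carrier G" by simp
next
  fix x y z assume "x \<in> carrier G" "y \<in> carrier G" "z \<in> carrier G"
  then show "x \<otimes>\<^bsub>G\<^esub> y \<otimes>\<^bsub>G\<^esub> z = x \<otimes>\<^bsub>G\<^esub> (y \<otimes>\<^bsub>G\<^esub> z)"
    by (cases x, cases y, cases z) (simp add: al_comp K.m_assoc H.m_assoc)
next
  fix x assume "x \<in> carrier G"
  then show "\<one>\<^bsub>G\<^esub> \<otimes>\<^bsub>G\<^esub> x = x" by (cases x) (auto simp: al_one)
next
  fix x assume "x \<in> carrier G"
  then obtain k h where x: "x = (k, h)" "k \<in> carrier K" "h \<in> carrier H" by auto
  have e: "alpha (inv\<^bsub>H\<^esub> h) (inv\<^bsub>K\<^esub> k) \<otimes>\<^bsub>K\<^esub> alpha (inv\<^bsub>H\<^esub> h) k = \<one>\<^bsub>K\<^esub>"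
    using x al_mult[of "inv\<^bsub>H\<^esub> h" "inv\<^bsub>K\<^esub> k" k] by simp
  show "\<exists>y\<in>carrier G. y \<otimes>\<^bsub>G\<^esub> x = \<one>\<^bsub>G\<^esub>"
    by (rule bexI[of _ "(alpha (inv\<^bsub>H\<^esub> h) (inv\<^bsub>K\<^esub> k), inv\<^bsub>H\<^esub> h)"])
       (use x e in simp)+
qed

lemma G_inv [simp]: "k \<in> carrier K \<Longrightarrow> h \<in> carrier H \<Longrightarrow>
  inv\<^bsub>G\<^esub> (k, h) = (alpha (inv\<^bsub>H\<^esub> h) (inv\<^bsub>K\<^esub> k), inv\<^bsub>H\<^esub> h)"
proof (rule group.inv_equality[OF G_group])
  assume x: "k \<in> carrier K" "h \<in> carrier H"
  have e: "alpha (inv\<^bsub>H\<^esub> h) (inv\<^bsub>K\<^esub> k) \<otimes>\<^bsub>K\<^esub> alpha (inv\<^bsub>H\<^esub> h) k = \<one>\<^bsub>K\<^esub>"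
    using x al_mult[of "inv\<^bsub>H\<^esub> h" "inv\<^bsub>K\<^esub> k" k] by simp
  show "(alpha (inv\<^bsub>H\<^esub> h) (inv\<^bsub>K\<^esub> k), inv\<^bsub>H\<^esub> h) \<otimes>\<^bsub>G\<^esub> (k, h) = \<one>\<^bsub>G\<^esub>"
    using x e by simp
qed (auto)

end


locale frob = sdp K H phi for K :: "('k,'a) monoid_scheme" and H :: "('h,'b) monoid_scheme" and phi +
  assumes Kcomm: "comm_group K"
  and finK: "finite (carrier K)" and finH: "finite (carrier H)"
  and frob: "frobenius_action K H phi"
begin

sublocale KC: comm_group K by (rule Kcomm)

lemma fixfree: "h \<in> carrier H \<Longrightarrow> h \<noteq> \<one>\<^bsub>H\<^esub> \<Longrightarrow> x \<in> carrier K \<Longrightarrow> phi h x = x \<Longrightarrow> x = \<one>\<^bsub>K\<^esub>"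
  using frob by (auto simp: frobenius_action_def)

lemma Kntriv: "\<exists>x\<in>carrier K. x \<noteq> \<one>\<^bsub>K\<^esub>"
  using frob K.one_closed by (auto simp: frobenius_action_def)

lemma Hntriv: "\<exists>h\<in>carrier H. h \<noteq> \<one>\<^bsub>H\<^esub>"
  using frob H.one_closed by (auto simp: frobenius_action_def)

lemma H_cancel: "h1 \<in> carrier H \<Longrightarrow> h2 \<in> carrier H \<Longrightarrow> inv\<^bsub>H\<^esub> h2 \<otimes>\<^bsub>H\<^esub> h1 = \<one>\<^bsub>H\<^esub> \<Longrightarrow> h1 = h2"
proof -
  assume a: "h1 \<in> carrier H" "h2 \<in> carrier H" "inv\<^bsub>H\<^esub> h2 \<otimes>\<^bsub>H\<^esub> h1 = \<one>\<^bsub>H\<^esub>"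
  have "h2 \<otimes>\<^bsub>H\<^esub> (inv\<^bsub>H\<^esub> h2 \<otimes>\<^bsub>H\<^esub> h1) = h1" using a(1,2) by (simp add: H.m_assoc[symmetric])
  then show ?thesis using a by simp
qed

lemma phi_eq_on: assumes "h1 \<in> carrier H" "h2 \<in> carrier H"
  and "\<And>x. x \<in> carrier K \<Longrightarrow> phi h1 x = phi h2 x" shows "h1 = h2"
proof (rule ccontr)
  assume ne: "h1 \<noteq> h2"
  let ?g = "inv\<^bsub>H\<^esub> h2 \<otimes>\<^bsub>H\<^esub> h1"
  have g: "?g \<in> carrier H" using assms by simp
  have gne: "?g \<noteq> \<one>\<^bsub>H\<^esub>" using H_cancel assms ne by blast
  obtain x where x: "x \<in> carrier K" "x \<noteq> \<one>\<^bsub>K\<^esub>" using Kntriv by blast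
  have "phi ?g x = phi (inv\<^bsub>H\<^esub> h2) (phi h2 x)" using assms x by (simp add: al_comp)
  also have "\<dots> = x" using assms x by (simp add: al_inv_cancel)
  finally show False using fixfree[OF g gne x(1)] x by simp
qed

lemma phi_eq_pt: assumes "h1 \<in> carrier H" "h2 \<in> carrier H" "x \<in> carrier K" "x \<noteq> \<one>\<^bsub>K\<^esub>"
  and "phi h1 x = phi h2 x" shows "h1 = h2"
proof (rule ccontr)
  assume ne: "h1 \<noteq> h2"
  let ?g = "inv\<^bsub>H\<^esub> h2 \<otimes>\<^bsub>H\<^esub> h1"
  have g: "?g \<in> carrier H" using assms by simp
  have gne: "?g \<noteq> \<one>\<^bsub>H\<^esub>" using H_cancel assms ne by blast
  have "phi ?g x = phi (inv\<^bsub>H\<^esub> h2) (phi h2 x)" using assms by (simp add: al_comp)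
  also have "\<dots> = x" using assms by (simp add: al_inv_cancel)
  finally show False using fixfree[OF g gne assms(3)] assms by simp
qed

definition orb :: "'k \<Rightarrow> 'k set" where "orb x = (\<lambda>h. phi h x) ` carrier H"

lemma orb_sub: "x \<in> carrier K - {\<one>\<^bsub>K\<^esub>} \<Longrightarrow> orb x \<subseteq> carrier K - {\<one>\<^bsub>K\<^esub>}"
proof
  fix y assume x: "x \<in> carrier K - {\<one>\<^bsub>K\<^esub>}" and "y \<in> orb x"
  then obtain h where h: "h \<in> carrier H" "y = phi h x" by (auto simp: orb_def)
  have "phi h x \<noteq> phi h \<one>\<^bsub>K\<^esub>"
  proof
    assume "phi h x = phi h \<one>\<^bsub>K\<^esub>"
    then have "x = \<one>\<^bsub>K\<^esub>" using inj_onD[OF bij_betw_imp_inj_on[OF al_bij[OF h(1)]]] x by auto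
    then show False using x by simp
  qed
  then show "y \<in> carrier K - {\<one>\<^bsub>K\<^esub>}" using x h by auto
qed

lemma orb_card: "x \<in> carrier K - {\<one>\<^bsub>K\<^esub>} \<Longrightarrow> card (orb x) = card (carrier H)"
  unfolding orb_def
  by (rule card_image) (auto intro!: inj_onI intro: phi_eq_pt)

lemma orb_self: "x \<in> carrier K \<Longrightarrow> x \<in> orb x"
  unfolding orb_def using al_one by (metis H.one_closed image_eqI)

lemma orb_eq: assumes "x \<in> carrier K" "y \<in> orb x" shows "orb y = orb x"
proof -
  obtain g where g: "g \<in> carrier H" "y = phi g x" using assms by (auto simp: orb_def)
  have "orb y = (\<lambda>h. phi (h \<otimes>\<^bsub>H\<^esub> g) x) ` carrier H"
    unfolding orb_def using g assms by (auto simp: al_comp)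
  also have "\<dots> = (\<lambda>h. phi h x) ` ((\<lambda>h. h \<otimes>\<^bsub>H\<^esub> g) ` carrier H)" by auto
  also have "(\<lambda>h. h \<otimes>\<^bsub>H\<^esub> g) ` carrier H = carrier H"
  proof
    show "(\<lambda>h. h \<otimes>\<^bsub>H\<^esub> g) ` carrier H \<subseteq> carrier H" using g by auto
    show "carrier H \<subseteq> (\<lambda>h. h \<otimes>\<^bsub>H\<^esub> g) ` carrier H"
    proof
      fix h assume h: "h \<in> carrier H"
      then have "h = (h \<otimes>\<^bsub>H\<^esub> inv\<^bsub>H\<^esub> g) \<otimes>\<^bsub>H\<^esub> g" using g by (simp add: H.m_assoc)
      then show "h \<in> (\<lambda>h. h \<otimes>\<^bsub>H\<^esub> g) ` carrier H" using h g by blast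
    qed
  qed
  finally show ?thesis by (simp add: orb_def)
qed

lemma card_dvd: "card (carrier H) dvd card (carrier K) - 1"
proof -
  let ?X = "carrier K - {\<one>\<^bsub>K\<^esub>}"
  let ?C = "orb ` ?X"
  have U: "\<Union>?C = ?X" using orb_sub orb_self by blast
  have "card (carrier H) * card ?C = card (\<Union>?C)"
  proof (rule card_partition)
    show "finite ?C" using finK by simp
    show "finite (\<Union>?C)" using U finK by simp
    show "\<And>c. c \<in> ?C \<Longrightarrow> card c = card (carrier H)" using orb_card by blast
    show "\<And>c1 c2. c1 \<in> ?C \<Longrightarrow> c2 \<in> ?C \<Longrightarrow> c1 \<noteq> c2 \<Longrightarrow> c1 \<inter> c2 = {}"
    proof -
      fix c1 c2 assume "c1 \<in> ?C" "c2 \<in> ?C" "c1 \<noteq> c2"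
      then obtain x y where xy: "x \<in> ?X" "y \<in> ?X" "c1 = orb x" "c2 = orb y" "orb x \<noteq> orb y" by auto
      show "c1 \<inter> c2 = {}"
      proof (rule ccontr)
        assume "c1 \<inter> c2 \<noteq> {}"
        then obtain z where "z \<in> orb x" "z \<in> orb y" using xy by auto
        then have "orb z = orb x" "orb z = orb y" using orb_eq xy by auto
        then show False using xy by simp
      qed
    qed
  qed
  also have "\<dots> = card (carrier K) - 1" using U finK by (simp add: card_Diff_singleton)
  finally show ?thesis by (metis dvd_triv_left)
qed

abbreviation "nH \<equiv> card (carrier H)"
abbreviation "nK \<equiv> card (carrier K)"

lemma nK_pos: "nK \<ge> 1"
proof -
  have "carrier K \<noteq> {}" using K.one_closed by blast
  then have "0 < nK" using finK by (simp add: card_gt_0_iff)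
  then show ?thesis by simp
qed

lemma K_pow_nK: "x \<in> carrier K \<Longrightarrow> x [^]\<^bsub>K\<^esub> nK = \<one>\<^bsub>K\<^esub>"
  using K.pow_order_eq_1 by (simp add: order_def)

lemma H_pow_nH: "h \<in> carrier H \<Longrightarrow> h [^]\<^bsub>H\<^esub> nH = \<one>\<^bsub>H\<^esub>"
  using H.pow_order_eq_1 by (simp add: order_def)

definition mm :: nat where "mm = (nK - 1) div nH"

lemma nK_eq: "nK = Suc (mm * nH)"
proof -
  have "(nK - 1) div nH * nH = nK - 1" using card_dvd by (rule dvd_div_mult_self)
  then show ?thesis using nK_pos unfolding mm_def by simp
qed

lemma H_coprime: assumes "h \<in> carrier H" "h [^]\<^bsub>H\<^esub> nK = \<one>\<^bsub>H\<^esub>" shows "h = \<one>\<^bsub>H\<^esub>"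
proof -
  have "h [^]\<^bsub>H\<^esub> nK = h [^]\<^bsub>H\<^esub> (nH * mm) \<otimes>\<^bsub>H\<^esub> h"
    using nK_eq by (simp add: mult.commute)
  also have "h [^]\<^bsub>H\<^esub> (nH * mm) = \<one>\<^bsub>H\<^esub>"
    using assms H_pow_nH by (simp add: H.nat_pow_pow[symmetric])
  finally show ?thesis using assms by simp
qed

lemma K_div: assumes "x \<in> carrier K" shows "x = inv\<^bsub>K\<^esub> (x [^]\<^bsub>K\<^esub> (nH * mm))"
proof -
  have "x [^]\<^bsub>K\<^esub> (nH * mm) \<otimes>\<^bsub>K\<^esub> x = \<one>\<^bsub>K\<^esub>"
    using K_pow_nK[OF assms] nK_eq by (simp add: mult.commute)
  then have "x \<otimes>\<^bsub>K\<^esub> x [^]\<^bsub>K\<^esub> (nH * mm) = \<one>\<^bsub>K\<^esub>" using assms by (simp add: KC.m_comm)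
  then show ?thesis using assms K.inv_equality[of x "x [^]\<^bsub>K\<^esub> (nH * mm)"] by simp
qed

end


context frob begin

abbreviation "A \<equiv> AutoGroup K"
abbreviation "P \<equiv> phi ` carrier H"
abbreviation "Nz \<equiv> normalizer A P"

lemma A_group: "group A" by (rule K.AutoGroup)

lemma A_carrier [simp]: "carrier A = auto K" by (simp add: AutoGroup_def)

lemma auto_Bij: "a \<in> auto K \<Longrightarrow> a \<in> Bij (carrier K)" by (simp add: auto_def)
lemma auto_bij: "a \<in> auto K \<Longrightarrow> bij_betw a (carrier K) (carrier K)" by (simp add: auto_def Bij_def)
lemma auto_ext: "a \<in> auto K \<Longrightarrow> x \<notin> carrier K \<Longrightarrow> a x = undefined"
  by (simp add: auto_def Bij_def extensional_def)
lemma auto_closed [simp]: "a \<in> auto K \<Longrightarrow> x \<in> carrier K \<Longrightarrow> a x \<in> carrier K"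
  using auto_bij bij_betwE by blast
lemma auto_homK: "a \<in> auto K \<Longrightarrow> a \<in> hom K K" by (simp add: auto_def)
lemma auto_mult [simp]: "a \<in> auto K \<Longrightarrow> x \<in> carrier K \<Longrightarrow> y \<in> carrier K \<Longrightarrow>
   a (x \<otimes>\<^bsub>K\<^esub> y) = a x \<otimes>\<^bsub>K\<^esub> a y"
  using auto_homK[of a] unfolding hom_def by blast
lemma auto_gh: "a \<in> auto K \<Longrightarrow> group_hom K K a"
  using auto_homK[of a] K.group_axioms by (intro group_hom.intro group_hom_axioms.intro)
lemma auto_one [simp]: "a \<in> auto K \<Longrightarrow> a \<one>\<^bsub>K\<^esub> = \<one>\<^bsub>K\<^esub>"
  by (rule group_hom.hom_one[OF auto_gh])
lemma auto_inv [simp]: "a \<in> auto K \<Longrightarrow> x \<in> carrier K \<Longrightarrow> a (inv\<^bsub>K\<^esub> x) = inv\<^bsub>K\<^esub> (a x)"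
  by (rule group_hom.hom_inv[OF auto_gh])
lemma auto_pow [simp]: "a \<in> auto K \<Longrightarrow> x \<in> carrier K \<Longrightarrow> a (x [^]\<^bsub>K\<^esub> (n::nat)) = (a x) [^]\<^bsub>K\<^esub> n"
  by (rule group_hom.hom_nat_pow[OF auto_gh])
lemma auto_inj: "a \<in> auto K \<Longrightarrow> x \<in> carrier K \<Longrightarrow> y \<in> carrier K \<Longrightarrow> a x = a y \<Longrightarrow> x = y"
  using inj_onD[OF bij_betw_imp_inj_on[OF auto_bij]] by blast
lemma auto_surj: "a \<in> auto K \<Longrightarrow> y \<in> carrier K \<Longrightarrow> \<exists>x\<in>carrier K. y = a x"
proof -
  assume a: "a \<in> auto K" "y \<in> carrier K"
  have "a ` carrier K = carrier K" using bij_betw_imp_surj_on[OF auto_bij[OF a(1)]] .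
  then show ?thesis using a(2) by blast
qed

lemma auto_eqI: assumes "a \<in> auto K" "b \<in> auto K" "\<And>x. x \<in> carrier K \<Longrightarrow> a x = b x" shows "a = b"
proof (rule ext)
  fix x show "a x = b x"
  proof (cases "x \<in> carrier K")
    case True then show ?thesis using assms by simp
  next
    case False then show ?thesis using auto_ext[OF assms(1) False] auto_ext[OF assms(2) False] by simp
  qed
qed

lemma A_mult: "a \<in> auto K \<Longrightarrow> b \<in> auto K \<Longrightarrow> a \<otimes>\<^bsub>A\<^esub> b = compose (carrier K) a b"
  by (simp add: AutoGroup_def BijGroup_def auto_Bij)

lemma A_mult_apply [simp]: "a \<in> auto K \<Longrightarrow> b \<in> auto K \<Longrightarrow> x \<in> carrier K \<Longrightarrow> (a \<otimes>\<^bsub>A\<^esub> b) x = a (b x)"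
  by (simp add: A_mult compose_def)

lemma A_mult_closed [simp]: "a \<in> auto K \<Longrightarrow> b \<in> auto K \<Longrightarrow> a \<otimes>\<^bsub>A\<^esub> b \<in> auto K"
  using group.subgroupE(4)[OF group_BijGroup K.subgroup_auto] by (simp add: AutoGroup_def)

lemma A_inv: "a \<in> auto K \<Longrightarrow> inv\<^bsub>A\<^esub> a = restrict (inv_into (carrier K) a) (carrier K)"
proof -
  assume a: "a \<in> auto K"
  have "inv\<^bsub>A\<^esub> a = inv\<^bsub>BijGroup (carrier K)\<^esub> a"
    using group.m_inv_consistent[OF group_BijGroup K.subgroup_auto a] by (simp add: AutoGroup_def)
  then show ?thesis using inv_BijGroup[OF auto_Bij[OF a]] by simp
qed

lemma A_inv_closed [simp]: "a \<in> auto K \<Longrightarrow> inv\<^bsub>A\<^esub> a \<in> auto K"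
  using group.inv_closed[OF A_group] by simp

lemma A_inv_apply: "a \<in> auto K \<Longrightarrow> x \<in> carrier K \<Longrightarrow> a ((inv\<^bsub>A\<^esub> a) x) = x"
  using A_inv auto_bij by (simp add: bij_betw_def f_inv_into_f)

lemma A_inv_apply2: "a \<in> auto K \<Longrightarrow> x \<in> carrier K \<Longrightarrow> (inv\<^bsub>A\<^esub> a) (a x) = x"
  using A_inv auto_bij by (simp add: bij_betw_def inv_into_f_f)

lemma phi_auto: "h \<in> carrier H \<Longrightarrow> phi h \<in> auto K" by (rule al_auto)

lemma conj_iff: assumes a: "a \<in> auto K" and p: "p \<in> auto K" and q: "q \<in> auto K"
  shows "(a \<otimes>\<^bsub>A\<^esub> p \<otimes>\<^bsub>A\<^esub> inv\<^bsub>A\<^esub> a = q) \<longleftrightarrow> (\<forall>x\<in>carrier K. q (a x) = a (p x))"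
proof
  assume e: "a \<otimes>\<^bsub>A\<^esub> p \<otimes>\<^bsub>A\<^esub> inv\<^bsub>A\<^esub> a = q"
  show "\<forall>x\<in>carrier K. q (a x) = a (p x)"
  proof
    fix x assume x: "x \<in> carrier K"
    have "q (a x) = (a \<otimes>\<^bsub>A\<^esub> p \<otimes>\<^bsub>A\<^esub> inv\<^bsub>A\<^esub> a) (a x)" using e by simp
    also have "\<dots> = a (p x)" using a p x by (simp add: A_inv_apply2)
    finally show "q (a x) = a (p x)" .
  qed
next
  assume e: "\<forall>x\<in>carrier K. q (a x) = a (p x)"
  show "a \<otimes>\<^bsub>A\<^esub> p \<otimes>\<^bsub>A\<^esub> inv\<^bsub>A\<^esub> a = q"
  proof (rule auto_eqI)
    show "a \<otimes>\<^bsub>A\<^esub> p \<otimes>\<^bsub>A\<^esub> inv\<^bsub>A\<^esub> a \<in> auto K" using a p by simp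
    show "q \<in> auto K" by (rule q)
    fix y assume y: "y \<in> carrier K"
    have "(a \<otimes>\<^bsub>A\<^esub> p \<otimes>\<^bsub>A\<^esub> inv\<^bsub>A\<^esub> a) y = a (p ((inv\<^bsub>A\<^esub> a) y))" using a p y by simp
    also have "\<dots> = q (a ((inv\<^bsub>A\<^esub> a) y))" using e a y by simp
    also have "\<dots> = q y" using a y by (simp add: A_inv_apply)
    finally show "(a \<otimes>\<^bsub>A\<^esub> p \<otimes>\<^bsub>A\<^esub> inv\<^bsub>A\<^esub> a) y = q y" .
  qed
qed

lemma P_sub: "P \<subseteq> carrier A" using phi_auto by auto

lemma Nz_def2: "Nz = {a \<in> auto K. (a <#\<^bsub>A\<^esub> P) #>\<^bsub>A\<^esub> inv\<^bsub>A\<^esub> a = P}"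
  unfolding normalizer_def stabilizer_def using P_sub by auto

lemma coset_eq: "(a <#\<^bsub>A\<^esub> P) #>\<^bsub>A\<^esub> inv\<^bsub>A\<^esub> a = (\<lambda>p. a \<otimes>\<^bsub>A\<^esub> p \<otimes>\<^bsub>A\<^esub> inv\<^bsub>A\<^esub> a) ` P"
  unfolding l_coset_def r_coset_def by auto

definition rel :: "('k \<Rightarrow> 'k) \<Rightarrow> 'h \<Rightarrow> 'h \<Rightarrow> bool" where
  "rel a h h' \<longleftrightarrow> (\<forall>x\<in>carrier K. phi h' (a x) = a (phi h x))"

lemma Nz_iff: "a \<in> Nz \<longleftrightarrow> a \<in> auto K \<and> (\<forall>h\<in>carrier H. \<exists>h'\<in>carrier H. rel a h h')
    \<and> (\<forall>h'\<in>carrier H. \<exists>h\<in>carrier H. rel a h h')"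
proof (cases "a \<in> auto K")
  case False then show ?thesis using Nz_def2 by auto
next
  case a: True
  have ci: "\<And>h h'. h \<in> carrier H \<Longrightarrow> h' \<in> carrier H \<Longrightarrow>
     (a \<otimes>\<^bsub>A\<^esub> phi h \<otimes>\<^bsub>A\<^esub> inv\<^bsub>A\<^esub> a = phi h') = rel a h h'"
    using conj_iff[OF a phi_auto phi_auto] by (simp add: rel_def)
  have "a \<in> Nz \<longleftrightarrow> (\<lambda>p. a \<otimes>\<^bsub>A\<^esub> p \<otimes>\<^bsub>A\<^esub> inv\<^bsub>A\<^esub> a) ` P = P"
    using a Nz_def2 coset_eq by auto
  also have "\<dots> \<longleftrightarrow> (\<forall>h\<in>carrier H. \<exists>h'\<in>carrier H. rel a h h')
    \<and> (\<forall>h'\<in>carrier H. \<exists>h\<in>carrier H. rel a h h')"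
  proof
    assume e: "(\<lambda>p. a \<otimes>\<^bsub>A\<^esub> p \<otimes>\<^bsub>A\<^esub> inv\<^bsub>A\<^esub> a) ` P = P"
    show "(\<forall>h\<in>carrier H. \<exists>h'\<in>carrier H. rel a h h') \<and> (\<forall>h'\<in>carrier H. \<exists>h\<in>carrier H. rel a h h')"
    proof
      show "\<forall>h\<in>carrier H. \<exists>h'\<in>carrier H. rel a h h'"
      proof
        fix h assume h: "h \<in> carrier H"
        then have "a \<otimes>\<^bsub>A\<^esub> phi h \<otimes>\<^bsub>A\<^esub> inv\<^bsub>A\<^esub> a \<in> P" using e by blast
        then obtain h' where "h' \<in> carrier H" "a \<otimes>\<^bsub>A\<^esub> phi h \<otimes>\<^bsub>A\<^esub> inv\<^bsub>A\<^esub> a = phi h'" by auto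
        then show "\<exists>h'\<in>carrier H. rel a h h'" using ci h by blast
      qed
      show "\<forall>h'\<in>carrier H. \<exists>h\<in>carrier H. rel a h h'"
      proof
        fix h' assume h': "h' \<in> carrier H"
        then have "phi h' \<in> (\<lambda>p. a \<otimes>\<^bsub>A\<^esub> p \<otimes>\<^bsub>A\<^esub> inv\<^bsub>A\<^esub> a) ` P" using e by blast
        then obtain h where "h \<in> carrier H" "phi h' = a \<otimes>\<^bsub>A\<^esub> phi h \<otimes>\<^bsub>A\<^esub> inv\<^bsub>A\<^esub> a" by auto
        then show "\<exists>h\<in>carrier H. rel a h h'" using ci[of h h'] h' by auto
      qed
    qed
  next
    assume e: "(\<forall>h\<in>carrier H. \<exists>h'\<in>carrier H. rel a h h') \<and> (\<forall>h'\<in>carrier H. \<exists>h\<in>carrier H. rel a h h')"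
    show "(\<lambda>p. a \<otimes>\<^bsub>A\<^esub> p \<otimes>\<^bsub>A\<^esub> inv\<^bsub>A\<^esub> a) ` P = P"
    proof
      show "(\<lambda>p. a \<otimes>\<^bsub>A\<^esub> p \<otimes>\<^bsub>A\<^esub> inv\<^bsub>A\<^esub> a) ` P \<subseteq> P"
      proof
        fix q assume "q \<in> (\<lambda>p. a \<otimes>\<^bsub>A\<^esub> p \<otimes>\<^bsub>A\<^esub> inv\<^bsub>A\<^esub> a) ` P"
        then obtain h where h: "h \<in> carrier H" "q = a \<otimes>\<^bsub>A\<^esub> phi h \<otimes>\<^bsub>A\<^esub> inv\<^bsub>A\<^esub> a" by auto
        obtain h' where "h' \<in> carrier H" "rel a h h'" using e h by blast
        then show "q \<in> P" using ci h by auto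
      qed
      show "P \<subseteq> (\<lambda>p. a \<otimes>\<^bsub>A\<^esub> p \<otimes>\<^bsub>A\<^esub> inv\<^bsub>A\<^esub> a) ` P"
      proof
        fix q assume "q \<in> P"
        then obtain h' where h': "h' \<in> carrier H" "q = phi h'" by auto
        obtain h where "h \<in> carrier H" "rel a h h'" using e h' by blast
        then show "q \<in> (\<lambda>p. a \<otimes>\<^bsub>A\<^esub> p \<otimes>\<^bsub>A\<^esub> inv\<^bsub>A\<^esub> a) ` P" using ci h' by force
      qed
    qed
  qed
  finally show ?thesis using a by simp
qed

lemma Nz_auto: "a \<in> Nz \<Longrightarrow> a \<in> auto K" using Nz_iff by blast

lemma Nz_sub: "subgroup Nz A"
  using group.normalizer_imp_subgroup[OF A_group P_sub] .

lemma rel_unique: "a \<in> auto K \<Longrightarrow> h \<in> carrier H \<Longrightarrow> h1 \<in> carrier H \<Longrightarrow> h2 \<in> carrier H \<Longrightarrow>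
   rel a h h1 \<Longrightarrow> rel a h h2 \<Longrightarrow> h1 = h2"
proof -
  assume a: "a \<in> auto K" "h \<in> carrier H" "h1 \<in> carrier H" "h2 \<in> carrier H" "rel a h h1" "rel a h h2"
  show "h1 = h2"
  proof (rule phi_eq_on[OF a(3,4)])
    fix y assume y: "y \<in> carrier K"
    obtain x where x: "x \<in> carrier K" "y = a x" using auto_surj[OF a(1) y] by blast
    show "phi h1 y = phi h2 y" using a(5,6) x unfolding rel_def by simp
  qed
qed

definition sig :: "('k \<Rightarrow> 'k) \<Rightarrow> 'h \<Rightarrow> 'h" where
  "sig a h = (THE h'. h' \<in> carrier H \<and> rel a h h')"

lemma sig: assumes "a \<in> Nz" "h \<in> carrier H" shows "sig a h \<in> carrier H \<and> rel a h (sig a h)"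
proof -
  obtain h' where h': "h' \<in> carrier H" "rel a h h'" using assms Nz_iff by blast
  have "sig a h = h'" unfolding sig_def
    using h' rel_unique[OF Nz_auto[OF assms(1)] assms(2)] by blast
  then show ?thesis using h' by simp
qed

lemma sig_closed [simp]: "a \<in> Nz \<Longrightarrow> h \<in> carrier H \<Longrightarrow> sig a h \<in> carrier H" using sig by blast

lemma sig_rel: "a \<in> Nz \<Longrightarrow> h \<in> carrier H \<Longrightarrow> x \<in> carrier K \<Longrightarrow> phi (sig a h) (a x) = a (phi h x)"
  using sig rel_def by blast

lemma sig_eq: "a \<in> Nz \<Longrightarrow> h \<in> carrier H \<Longrightarrow> h' \<in> carrier H \<Longrightarrow> rel a h h' \<Longrightarrow> sig a h = h'"
  using sig rel_unique Nz_auto by blast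

lemma sig_mult: assumes a: "a \<in> Nz" and h: "h1 \<in> carrier H" "h2 \<in> carrier H"
  shows "sig a (h1 \<otimes>\<^bsub>H\<^esub> h2) = sig a h1 \<otimes>\<^bsub>H\<^esub> sig a h2"
  using a h by (intro sig_eq) (auto simp: rel_def al_comp sig_rel Nz_auto)

lemma sig_one: assumes a: "a \<in> Nz" shows "sig a \<one>\<^bsub>H\<^esub> = \<one>\<^bsub>H\<^esub>"
  using a by (intro sig_eq) (auto simp: rel_def al_one Nz_auto)

lemma sig_inj: assumes a: "a \<in> Nz" and h: "h1 \<in> carrier H" "h2 \<in> carrier H"
  and e: "sig a h1 = sig a h2" shows "h1 = h2"
proof (rule phi_eq_on[OF h])
  fix x assume x: "x \<in> carrier K"
  have "a (phi h1 x) = a (phi h2 x)" using sig_rel[OF a h(1) x] sig_rel[OF a h(2) x] e by simp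
  then show "phi h1 x = phi h2 x" using auto_inj[OF Nz_auto[OF a]] x h by simp
qed

lemma sig_comp: assumes a: "a \<in> Nz" and b: "b \<in> Nz" and h: "h \<in> carrier H"
  shows "sig (a \<otimes>\<^bsub>A\<^esub> b) h = sig a (sig b h)"
proof -
  have ab: "a \<otimes>\<^bsub>A\<^esub> b \<in> Nz" using subgroup.m_closed[OF Nz_sub a b] .
  show ?thesis
    using a b h Nz_auto[OF a] Nz_auto[OF b] by (intro sig_eq[OF ab h]) (auto simp: rel_def sig_rel)
qed

end


context frob begin

lemma Kcancel: "p \<in> carrier K \<Longrightarrow> u \<in> carrier K \<Longrightarrow> q \<in> carrier K \<Longrightarrow>
  p \<otimes>\<^bsub>K\<^esub> inv\<^bsub>K\<^esub> u \<otimes>\<^bsub>K\<^esub> (u \<otimes>\<^bsub>K\<^esub> q) = p \<otimes>\<^bsub>K\<^esub> q"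
proof -
  assume a: "p \<in> carrier K" "u \<in> carrier K" "q \<in> carrier K"
  have "inv\<^bsub>K\<^esub> u \<otimes>\<^bsub>K\<^esub> (u \<otimes>\<^bsub>K\<^esub> q) = q" using a by (simp add: K.m_assoc[symmetric])
  then show ?thesis using a by (simp add: K.m_assoc)
qed

lemma NzA_group: "group (A\<lparr>carrier := Nz\<rparr>)"
  by (rule subgroup.subgroup_is_group[OF Nz_sub A_group])

lemma NzA_hom: "(\<lambda>a. a) \<in> hom (A\<lparr>carrier := Nz\<rparr>) A"
  using subgroup.subset[OF Nz_sub] by (auto simp: hom_def)

lemma A_hom: "(\<lambda>a. a) \<in> hom A A"
  by (auto simp: hom_def)

sublocale TG: sdp K "A\<lparr>carrier := Nz\<rparr>" "\<lambda>a. a"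
  by (intro sdp.intro sdp_axioms.intro K.group_axioms NzA_group NzA_hom)

sublocale HG: sdp K A "\<lambda>a. a"
  by (intro sdp.intro sdp_axioms.intro K.group_axioms A_group A_hom)

lemma holo_sub: "subgroup (carrier K \<times> Nz) (holomorph K)"
proof -
  have hol: "holomorph K = HG.G" by (simp add: holomorph_def)
  show ?thesis unfolding hol
  proof (rule subgroup.intro)
    show "carrier K \<times> Nz \<subseteq> carrier HG.G" using subgroup.subset[OF Nz_sub] by auto
  next
    fix x y assume "x \<in> carrier K \<times> Nz" "y \<in> carrier K \<times> Nz"
    then obtain k1 a1 k2 a2 where xy: "x = (k1, a1)" "y = (k2, a2)" "k1 \<in> carrier K" "k2 \<in> carrier K"
      "a1 \<in> Nz" "a2 \<in> Nz" by auto
    have "a1 \<otimes>\<^bsub>A\<^esub> a2 \<in> Nz" using subgroup.m_closed[OF Nz_sub] xy by blast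
    then show "x \<otimes>\<^bsub>HG.G\<^esub> y \<in> carrier K \<times> Nz" using xy Nz_auto by simp
  next
    show "\<one>\<^bsub>HG.G\<^esub> \<in> carrier K \<times> Nz" using subgroup.one_closed[OF Nz_sub] by simp
  next
    fix x assume "x \<in> carrier K \<times> Nz"
    then obtain k a where x: "x = (k, a)" "k \<in> carrier K" "a \<in> Nz" by auto
    have "inv\<^bsub>A\<^esub> a \<in> Nz" using subgroup.m_inv_closed[OF Nz_sub] x by blast
    then show "inv\<^bsub>HG.G\<^esub> x \<in> carrier K \<times> Nz" using x Nz_auto by simp
  qed
qed

definition Psi :: "'k \<times> ('k \<Rightarrow> 'k) \<Rightarrow> ('k \<times> 'h \<Rightarrow> 'k \<times> 'h)" where
  "Psi ka = (\<lambda>g\<in>carrier K \<times> carrier H.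
     (fst ka \<otimes>\<^bsub>K\<^esub> snd ka (fst g) \<otimes>\<^bsub>K\<^esub> phi (sig (snd ka) (snd g)) (inv\<^bsub>K\<^esub> (fst ka)),
      sig (snd ka) (snd g)))"

lemma Psi_apply [simp]: "x \<in> carrier K \<Longrightarrow> h \<in> carrier H \<Longrightarrow>
  Psi (k, a) (x, h) = (k \<otimes>\<^bsub>K\<^esub> a x \<otimes>\<^bsub>K\<^esub> phi (sig a h) (inv\<^bsub>K\<^esub> k), sig a h)"
  by (simp add: Psi_def)

lemma Psi_out: "g \<notin> carrier G \<Longrightarrow> Psi ka g = undefined"
  by (simp add: Psi_def)

lemma G_fin: "finite (carrier G)" using finK finH by simp

lemma Psi_closed: assumes k: "k \<in> carrier K" and a: "a \<in> Nz" and g: "g \<in> carrier G"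
  shows "Psi (k, a) g \<in> carrier G"
  using k a g Nz_auto[OF a] by (cases g) simp

lemma Psi_inj1: assumes k: "k \<in> carrier K" and a: "a \<in> Nz"
  shows "inj_on (Psi (k, a)) (carrier G)"
proof (rule inj_onI)
  fix g1 g2 assume g: "g1 \<in> carrier G" "g2 \<in> carrier G" and e: "Psi (k, a) g1 = Psi (k, a) g2"
  obtain x1 h1 x2 h2 where gg: "g1 = (x1, h1)" "g2 = (x2, h2)" "x1 \<in> carrier K" "x2 \<in> carrier K"
    "h1 \<in> carrier H" "h2 \<in> carrier H" using g by auto
  have s: "sig a h1 = sig a h2" using e gg by simp
  have h: "h1 = h2" using sig_inj[OF a gg(5,6) s] .
  have au: "a \<in> auto K" using Nz_auto[OF a] .
  let ?u = "phi (sig a h1) (inv\<^bsub>K\<^esub> k)"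
  have u: "?u \<in> carrier K" using a gg k by simp
  have "k \<otimes>\<^bsub>K\<^esub> a x1 \<otimes>\<^bsub>K\<^esub> ?u = k \<otimes>\<^bsub>K\<^esub> a x2 \<otimes>\<^bsub>K\<^esub> ?u" using e gg h by simp
  then have "a x1 = a x2" using k u gg au by (simp add: K.m_assoc)
  then have "x1 = x2" using auto_inj[OF au] gg by blast
  then show "g1 = g2" using gg h by simp
qed

lemma Psi_hom1: assumes k: "k \<in> carrier K" and a: "a \<in> Nz"
  shows "Psi (k, a) \<in> hom G G"
proof (rule homI)
  fix g assume "g \<in> carrier G" then show "Psi (k, a) g \<in> carrier G" using Psi_closed k a by blast
next
  fix g1 g2 assume g: "g1 \<in> carrier G" "g2 \<in> carrier G"
  obtain x1 h1 x2 h2 where gg: "g1 = (x1, h1)" "g2 = (x2, h2)" "x1 \<in> carrier K" "x2 \<in> carrier K"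
    "h1 \<in> carrier H" "h2 \<in> carrier H" using g by auto
  have au: "a \<in> auto K" using Nz_auto[OF a] .
  define s1 where "s1 = sig a h1"
  define s2 where "s2 = sig a h2"
  have s: "s1 \<in> carrier H" "s2 \<in> carrier H" using a gg by (simp_all add: s1_def s2_def)
  have s12: "sig a (h1 \<otimes>\<^bsub>H\<^esub> h2) = s1 \<otimes>\<^bsub>H\<^esub> s2" using sig_mult[OF a gg(5,6)] by (simp add: s1_def s2_def)
  have r: "a (phi h1 x2) = phi s1 (a x2)" using sig_rel[OF a gg(5) gg(4)] by (simp add: s1_def)
  let ?u = "phi s1 k"
  let ?w = "phi (s1 \<otimes>\<^bsub>H\<^esub> s2) (inv\<^bsub>K\<^esub> k)"
  have cl: "?u \<in> carrier K" "?w \<in> carrier K" "a x1 \<in> carrier K" "a x2 \<in> carrier K" "phi s1 (a x2) \<in> carrier K"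
    using s k au gg by auto
  have L: "fst (Psi (k, a) (g1 \<otimes>\<^bsub>G\<^esub> g2)) = k \<otimes>\<^bsub>K\<^esub> a x1 \<otimes>\<^bsub>K\<^esub> phi s1 (a x2) \<otimes>\<^bsub>K\<^esub> ?w"
    using gg au s12 r cl k by (simp add: K.m_assoc)
  have "fst (Psi (k, a) g1 \<otimes>\<^bsub>G\<^esub> Psi (k, a) g2) =
     (k \<otimes>\<^bsub>K\<^esub> a x1 \<otimes>\<^bsub>K\<^esub> phi s1 (inv\<^bsub>K\<^esub> k)) \<otimes>\<^bsub>K\<^esub> phi s1 (k \<otimes>\<^bsub>K\<^esub> a x2 \<otimes>\<^bsub>K\<^esub> phi s2 (inv\<^bsub>K\<^esub> k))"
    using gg by (simp add: s1_def s2_def)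
  also have "\<dots> = (k \<otimes>\<^bsub>K\<^esub> a x1 \<otimes>\<^bsub>K\<^esub> inv\<^bsub>K\<^esub> ?u) \<otimes>\<^bsub>K\<^esub> (?u \<otimes>\<^bsub>K\<^esub> (phi s1 (a x2) \<otimes>\<^bsub>K\<^esub> ?w))"
    using s k au gg by (simp add: al_comp K.m_assoc)
  also have "\<dots> = k \<otimes>\<^bsub>K\<^esub> a x1 \<otimes>\<^bsub>K\<^esub> (phi s1 (a x2) \<otimes>\<^bsub>K\<^esub> ?w)"
    using cl k by (simp add: Kcancel)
  finally have R: "fst (Psi (k, a) g1 \<otimes>\<^bsub>G\<^esub> Psi (k, a) g2) = k \<otimes>\<^bsub>K\<^esub> a x1 \<otimes>\<^bsub>K\<^esub> phi s1 (a x2) \<otimes>\<^bsub>K\<^esub> ?w"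
    using cl k by (simp add: K.m_assoc)
  have S: "snd (Psi (k, a) (g1 \<otimes>\<^bsub>G\<^esub> g2)) = snd (Psi (k, a) g1 \<otimes>\<^bsub>G\<^esub> Psi (k, a) g2)"
    using gg s12 by (simp add: s1_def s2_def)
  show "Psi (k, a) (g1 \<otimes>\<^bsub>G\<^esub> g2) = Psi (k, a) g1 \<otimes>\<^bsub>G\<^esub> Psi (k, a) g2"
    using L R S by (simp add: prod_eq_iff)
qed

lemma Psi_auto: assumes k: "k \<in> carrier K" and a: "a \<in> Nz"
  shows "Psi (k, a) \<in> auto G"
proof -
  have img: "Psi (k, a) ` carrier G = carrier G"
    using endo_inj_surj[OF G_fin _ Psi_inj1[OF k a]] Psi_closed[OF k a] by blast
  have "Psi (k, a) \<in> Bij (carrier G)"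
    unfolding Bij_def using img Psi_inj1[OF k a]
    by (auto simp: bij_betw_def extensional_def Psi_out)
  then show ?thesis using Psi_hom1[OF k a] by (simp add: auto_def)
qed

end


lemma AG_mult: fixes W :: "('c, 'd) monoid_scheme" shows "f \<in> auto W \<Longrightarrow> g \<in> auto W \<Longrightarrow> f \<otimes>\<^bsub>AutoGroup W\<^esub> g = compose (carrier W) f g"
  by (simp add: AutoGroup_def BijGroup_def auto_def)

lemma AG_carrier [simp]: fixes W :: "('c, 'd) monoid_scheme" shows "carrier (AutoGroup W) = auto W"
  by (simp add: AutoGroup_def)

context frob begin

lemma Kc2: "x \<in> carrier K \<Longrightarrow> y \<in> carrier K \<Longrightarrow> x \<otimes>\<^bsub>K\<^esub> (inv\<^bsub>K\<^esub> x \<otimes>\<^bsub>K\<^esub> y) = y"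
  by (simp add: K.m_assoc[symmetric])

lemma Kc3: "x \<in> carrier K \<Longrightarrow> y \<in> carrier K \<Longrightarrow> inv\<^bsub>K\<^esub> x \<otimes>\<^bsub>K\<^esub> (x \<otimes>\<^bsub>K\<^esub> y) = y"
  by (simp add: K.m_assoc[symmetric])

lemma Kswap: assumes "p \<in> carrier K" "q \<in> carrier K" "r \<in> carrier K" "s \<in> carrier K"
  and e: "p \<otimes>\<^bsub>K\<^esub> inv\<^bsub>K\<^esub> q = r \<otimes>\<^bsub>K\<^esub> inv\<^bsub>K\<^esub> s"
  shows "p \<otimes>\<^bsub>K\<^esub> inv\<^bsub>K\<^esub> r = q \<otimes>\<^bsub>K\<^esub> inv\<^bsub>K\<^esub> s"
proof -
  have "p \<otimes>\<^bsub>K\<^esub> inv\<^bsub>K\<^esub> r = p \<otimes>\<^bsub>K\<^esub> inv\<^bsub>K\<^esub> q \<otimes>\<^bsub>K\<^esub> (q \<otimes>\<^bsub>K\<^esub> inv\<^bsub>K\<^esub> r)"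
    using assms(1-4) by (simp add: Kcancel)
  also have "\<dots> = r \<otimes>\<^bsub>K\<^esub> inv\<^bsub>K\<^esub> s \<otimes>\<^bsub>K\<^esub> (q \<otimes>\<^bsub>K\<^esub> inv\<^bsub>K\<^esub> r)" using e by simp
  also have "\<dots> = (q \<otimes>\<^bsub>K\<^esub> inv\<^bsub>K\<^esub> s) \<otimes>\<^bsub>K\<^esub> (inv\<^bsub>K\<^esub> r \<otimes>\<^bsub>K\<^esub> r)"
    using assms(1-4) by (simp add: KC.m_ac Kc2 Kc3)
  also have "\<dots> = q \<otimes>\<^bsub>K\<^esub> inv\<^bsub>K\<^esub> s" using assms(1-4) by simp
  finally show ?thesis .
qed

lemma Psi_mult: assumes k: "k1 \<in> carrier K" "k2 \<in> carrier K" and a: "a1 \<in> Nz" "a2 \<in> Nz"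
  shows "Psi ((k1, a1) \<otimes>\<^bsub>TG.G\<^esub> (k2, a2)) = Psi (k1, a1) \<otimes>\<^bsub>AutoGroup G\<^esub> Psi (k2, a2)"
proof -
  have au: "a1 \<in> auto K" "a2 \<in> auto K" using Nz_auto a by auto
  have a12: "a1 \<otimes>\<^bsub>A\<^esub> a2 \<in> Nz" using subgroup.m_closed[OF Nz_sub a] .
  have "Psi (k1, a1) \<otimes>\<^bsub>AutoGroup G\<^esub> Psi (k2, a2) = compose (carrier G) (Psi (k1, a1)) (Psi (k2, a2))"
    using AG_mult Psi_auto k a by blast
  also have "\<dots> = Psi ((k1, a1) \<otimes>\<^bsub>TG.G\<^esub> (k2, a2))"
  proof (rule ext)
    fix g show "compose (carrier G) (Psi (k1, a1)) (Psi (k2, a2)) g = Psi ((k1, a1) \<otimes>\<^bsub>TG.G\<^esub> (k2, a2)) g"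
    proof (cases "g \<in> carrier G")
      case False then show ?thesis by (simp add: compose_def Psi_out)
    next
      case True
      then obtain x h where g: "g = (x, h)" "x \<in> carrier K" "h \<in> carrier H" by auto
      define s2 where "s2 = sig a2 h"
      define s where "s = sig a1 s2"
      have s2: "s2 \<in> carrier H" using a g by (simp add: s2_def)
      have s: "s \<in> carrier H" using a s2 by (simp add: s_def)
      have ss: "sig (a1 \<otimes>\<^bsub>A\<^esub> a2) h = s" using sig_comp[OF a g(3)] by (simp add: s_def s2_def)
      have r: "a1 (phi s2 k2) = phi s (a1 k2)" using sig_rel[OF a(1) s2 k(2)] by (simp add: s_def)
      have ss2: "sig a1 s2 = s" by (simp add: s_def)
      show ?thesis using g k au s s2 ss r ss2
        by (simp add: compose_def s2_def[symmetric] KC.m_ac KC.inv_mult)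
    qed
  qed
  finally show ?thesis by simp
qed

lemma Psi_x1: assumes k: "k \<in> carrier K" and a: "a \<in> Nz" and x: "x \<in> carrier K"
  shows "Psi (k, a) (x, \<one>\<^bsub>H\<^esub>) = (a x, \<one>\<^bsub>H\<^esub>)"
proof -
  have au: "a \<in> auto K" using Nz_auto a by auto
  have s1: "sig a \<one>\<^bsub>H\<^esub> = \<one>\<^bsub>H\<^esub>" by (rule sig_one[OF a])
  have p1: "phi \<one>\<^bsub>H\<^esub> (inv\<^bsub>K\<^esub> k) = inv\<^bsub>K\<^esub> k" using k by (simp add: al_one)
  have e: "k \<otimes>\<^bsub>K\<^esub> a x \<otimes>\<^bsub>K\<^esub> phi \<one>\<^bsub>H\<^esub> (inv\<^bsub>K\<^esub> k) = a x"
    unfolding p1 using KC.m_comm[of k "a x"] k au x by (simp add: K.m_assoc)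
  show ?thesis using x s1 e by (simp del: al_invK)
qed

lemma Psi_inj: "inj_on Psi (carrier K \<times> Nz)"
proof (rule inj_onI)
  fix p q assume p: "p \<in> carrier K \<times> Nz" and q: "q \<in> carrier K \<times> Nz" and e: "Psi p = Psi q"
  obtain k1 a1 k2 a2 where pq: "p = (k1, a1)" "q = (k2, a2)" "k1 \<in> carrier K" "k2 \<in> carrier K"
      "a1 \<in> Nz" "a2 \<in> Nz" using p q by auto
  have au: "a1 \<in> auto K" "a2 \<in> auto K" using Nz_auto pq by auto
  have aeq: "a1 = a2"
  proof (rule auto_eqI[OF au])
    fix x assume x: "x \<in> carrier K"
    have "Psi (k1, a1) (x, \<one>\<^bsub>H\<^esub>) = Psi (k2, a2) (x, \<one>\<^bsub>H\<^esub>)" using e pq by (simp del: Psi_apply)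
    then show "a1 x = a2 x" unfolding Psi_x1[OF pq(3) pq(5) x] Psi_x1[OF pq(4) pq(6) x] by simp
  qed
  obtain h where h: "h \<in> carrier H" "h \<noteq> \<one>\<^bsub>H\<^esub>" using Hntriv by blast
  define s where "s = sig a1 h"
  have s: "s \<in> carrier H" using sig_closed[OF pq(5) h(1)] by (simp add: s_def)
  have sne: "s \<noteq> \<one>\<^bsub>H\<^esub>"
  proof
    assume "s = \<one>\<^bsub>H\<^esub>"
    then have "sig a1 h = sig a1 \<one>\<^bsub>H\<^esub>" using sig_one[OF pq(5)] by (simp add: s_def)
    then show False using sig_inj[OF pq(5) h(1) H.one_closed] h(2) by blast
  qed
  have "Psi (k1, a1) (\<one>\<^bsub>K\<^esub>, h) = Psi (k2, a2) (\<one>\<^bsub>K\<^esub>, h)" using e pq(1,2) by (simp del: Psi_apply)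
  then have "(k1 \<otimes>\<^bsub>K\<^esub> a1 \<one>\<^bsub>K\<^esub> \<otimes>\<^bsub>K\<^esub> phi (sig a1 h) (inv\<^bsub>K\<^esub> k1), sig a1 h) =
     (k2 \<otimes>\<^bsub>K\<^esub> a1 \<one>\<^bsub>K\<^esub> \<otimes>\<^bsub>K\<^esub> phi (sig a1 h) (inv\<^bsub>K\<^esub> k2), sig a1 h)"
    using h(1) aeq by (simp only: Psi_apply K.one_closed)
  then have "k1 \<otimes>\<^bsub>K\<^esub> phi s (inv\<^bsub>K\<^esub> k1) = k2 \<otimes>\<^bsub>K\<^esub> phi s (inv\<^bsub>K\<^esub> k2)"
    using pq(3,4) au(1) unfolding s_def[symmetric] by (simp del: al_invK)
  then have "k1 \<otimes>\<^bsub>K\<^esub> inv\<^bsub>K\<^esub> (phi s k1) = k2 \<otimes>\<^bsub>K\<^esub> inv\<^bsub>K\<^esub> (phi s k2)"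
    using pq(3,4) s by simp
  then have e2: "k1 \<otimes>\<^bsub>K\<^esub> inv\<^bsub>K\<^esub> k2 = phi s k1 \<otimes>\<^bsub>K\<^esub> inv\<^bsub>K\<^esub> (phi s k2)"
    using Kswap[of k1 "phi s k1" k2 "phi s k2"] pq(3,4) s by simp
  have "phi s (k1 \<otimes>\<^bsub>K\<^esub> inv\<^bsub>K\<^esub> k2) = phi s k1 \<otimes>\<^bsub>K\<^esub> inv\<^bsub>K\<^esub> (phi s k2)"
    using pq(3,4) s by simp
  then have "phi s (k1 \<otimes>\<^bsub>K\<^esub> inv\<^bsub>K\<^esub> k2) = k1 \<otimes>\<^bsub>K\<^esub> inv\<^bsub>K\<^esub> k2"
    using e2 by simp
  then have "k1 \<otimes>\<^bsub>K\<^esub> inv\<^bsub>K\<^esub> k2 = \<one>\<^bsub>K\<^esub>" using fixfree[OF s sne] pq(3,4) by simp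
  then have "inv\<^bsub>K\<^esub> (inv\<^bsub>K\<^esub> k2) = k1" using pq(3,4) K.inv_equality[of k1 "inv\<^bsub>K\<^esub> k2"] by simp
  then have "k1 = k2" using pq(4) by simp
  then show "p = q" using pq(1,2) aeq by simp
qed

lemma TG_carrier': "carrier TG.G = carrier K \<times> Nz" by simp

lemma Psi_hom: "Psi \<in> hom TG.G (AutoGroup G)"
proof (rule homI)
  fix p assume "p \<in> carrier TG.G" then show "Psi p \<in> carrier (AutoGroup G)"
    using Psi_auto by auto
next
  fix p q assume "p \<in> carrier TG.G" "q \<in> carrier TG.G"
  then show "Psi (p \<otimes>\<^bsub>TG.G\<^esub> q) = Psi p \<otimes>\<^bsub>AutoGroup G\<^esub> Psi q"
    using Psi_mult by auto
qed

end


context frob begin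

lemma fst_Gmult: "fst (p \<otimes>\<^bsub>G\<^esub> q) = fst p \<otimes>\<^bsub>K\<^esub> phi (snd p) (fst q)"
  by (cases p, cases q) simp

lemma snd_Gmult: "snd (p \<otimes>\<^bsub>G\<^esub> q) = snd p \<otimes>\<^bsub>H\<^esub> snd q"
  by (cases p, cases q) simp

lemma snd_pow: "snd (g [^]\<^bsub>G\<^esub> (n::nat)) = snd g [^]\<^bsub>H\<^esub> n"
  by (induction n) (simp_all add: snd_Gmult)

lemma pow_K1: "x \<in> carrier K \<Longrightarrow> (x, \<one>\<^bsub>H\<^esub>) [^]\<^bsub>G\<^esub> (n::nat) = (x [^]\<^bsub>K\<^esub> n, \<one>\<^bsub>H\<^esub>)"
  by (induction n) (simp_all add: al_one)

lemma phi_finprod: assumes h: "h \<in> carrier H" and g: "g \<in> B \<rightarrow> carrier K"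
  shows "phi h (finprod K g B) = finprod K (\<lambda>b. phi h (g b)) B"
  using g
proof (induction B rule: infinite_finite_induct)
  case (infinite B) then show ?case using h by simp
next
  case empty then show ?case using h by simp
next
  case (insert b B)
  have g1: "g \<in> B \<rightarrow> carrier K" "g b \<in> carrier K" using insert by auto
  have g2: "(\<lambda>b. phi h (g b)) \<in> B \<rightarrow> carrier K" "phi h (g b) \<in> carrier K" using g1 h by (auto simp: Pi_iff)
  have "phi h (finprod K g (insert b B)) = phi h (g b \<otimes>\<^bsub>K\<^esub> finprod K g B)"
    using insert g1 by (simp add: KC.finprod_insert)
  also have "\<dots> = phi h (g b) \<otimes>\<^bsub>K\<^esub> finprod K (\<lambda>b. phi h (g b)) B"
    using insert g1 h by simp
  also have "\<dots> = finprod K (\<lambda>b. phi h (g b)) (insert b B)"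
    using insert g2 by (simp add: KC.finprod_insert)
  finally show ?case .
qed

end

locale aut = frob K H phi for K :: "('k,'a) monoid_scheme" and H :: "('h,'b) monoid_scheme" and phi +
  fixes th :: "'k \<times> 'h \<Rightarrow> 'k \<times> 'h"
  assumes th: "th \<in> auto G"
begin

lemma th_hom: "th \<in> hom G G" using th by (simp add: auto_def)
lemma th_gh: "group_hom G G th"
  using th_hom G_group by (intro group_hom.intro group_hom_axioms.intro)
lemma th_Bij: "th \<in> Bij (carrier G)" using th by (simp add: auto_def)
lemma th_closed: "g \<in> carrier G \<Longrightarrow> th g \<in> carrier G"
  using th_hom by (auto simp: hom_def)
lemma th_mult: "g1 \<in> carrier G \<Longrightarrow> g2 \<in> carrier G \<Longrightarrow> th (g1 \<otimes>\<^bsub>G\<^esub> g2) = th g1 \<otimes>\<^bsub>G\<^esub> th g2"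
  using th_hom by (auto simp: hom_def)
lemma th_inj: "g1 \<in> carrier G \<Longrightarrow> g2 \<in> carrier G \<Longrightarrow> th g1 = th g2 \<Longrightarrow> g1 = g2"
  using th_Bij by (auto simp: Bij_def bij_betw_def dest: inj_onD)
lemma th_ext: "g \<notin> carrier G \<Longrightarrow> th g = undefined"
  using th_Bij unfolding Bij_def extensional_def by blast

lemma th_x1: assumes x: "x \<in> carrier K" shows "snd (th (x, \<one>\<^bsub>H\<^esub>)) = \<one>\<^bsub>H\<^esub>"
proof -
  have g: "(x, \<one>\<^bsub>H\<^esub>) \<in> carrier G" using x by simp
  have "th (x, \<one>\<^bsub>H\<^esub>) [^]\<^bsub>G\<^esub> nK = th ((x, \<one>\<^bsub>H\<^esub>) [^]\<^bsub>G\<^esub> nK)"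
    using group_hom.hom_nat_pow[OF th_gh g] by simp
  also have "\<dots> = th \<one>\<^bsub>G\<^esub>" using x by (simp add: pow_K1 K_pow_nK)
  also have "\<dots> = \<one>\<^bsub>G\<^esub>" using group_hom.hom_one[OF th_gh] .
  finally have "snd (th (x, \<one>\<^bsub>H\<^esub>)) [^]\<^bsub>H\<^esub> nK = \<one>\<^bsub>H\<^esub>"
    using snd_pow[of "th (x, \<one>\<^bsub>H\<^esub>)" nK] by simp
  moreover have "snd (th (x, \<one>\<^bsub>H\<^esub>)) \<in> carrier H" using th_closed[OF g] by auto
  ultimately show ?thesis using H_coprime by blast
qed

definition al :: "'k \<Rightarrow> 'k" where "al = (\<lambda>x\<in>carrier K. fst (th (x, \<one>\<^bsub>H\<^esub>)))"

lemma th_x: "x \<in> carrier K \<Longrightarrow> th (x, \<one>\<^bsub>H\<^esub>) = (al x, \<one>\<^bsub>H\<^esub>)"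
  using th_x1 by (simp add: al_def prod_eq_iff)

lemma al_closed': "x \<in> carrier K \<Longrightarrow> al x \<in> carrier K"
proof -
  assume x: "x \<in> carrier K"
  have "th (x, \<one>\<^bsub>H\<^esub>) \<in> carrier G" using th_closed x by simp
  then show ?thesis using th_x[OF x] by simp
qed

lemma al_auto': "al \<in> auto K"
proof -
  have hom: "al \<in> hom K K"
  proof (rule homI)
    fix x assume "x \<in> carrier K" then show "al x \<in> carrier K" by (rule al_closed')
  next
    fix x y assume xy: "x \<in> carrier K" "y \<in> carrier K"
    have eq: "(x \<otimes>\<^bsub>K\<^esub> y, \<one>\<^bsub>H\<^esub>) = (x, \<one>\<^bsub>H\<^esub>) \<otimes>\<^bsub>G\<^esub> (y, \<one>\<^bsub>H\<^esub>)" using xy by (simp add: al_one)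
    have "th (x \<otimes>\<^bsub>K\<^esub> y, \<one>\<^bsub>H\<^esub>) = th (x, \<one>\<^bsub>H\<^esub>) \<otimes>\<^bsub>G\<^esub> th (y, \<one>\<^bsub>H\<^esub>)"
      by (subst eq, rule th_mult) (use xy in simp_all)
    then have "(al (x \<otimes>\<^bsub>K\<^esub> y), \<one>\<^bsub>H\<^esub>) = (al x \<otimes>\<^bsub>K\<^esub> al y, \<one>\<^bsub>H\<^esub>)"
      using xy th_x al_closed' by (simp add: al_one)
    then show "al (x \<otimes>\<^bsub>K\<^esub> y) = al x \<otimes>\<^bsub>K\<^esub> al y" by simp
  qed
  have inj: "inj_on al (carrier K)"
  proof (rule inj_onI)
    fix x y assume xy: "x \<in> carrier K" "y \<in> carrier K" "al x = al y"
    then have "th (x, \<one>\<^bsub>H\<^esub>) = th (y, \<one>\<^bsub>H\<^esub>)" using th_x by simp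
    then show "x = y" using th_inj[of "(x, \<one>\<^bsub>H\<^esub>)" "(y, \<one>\<^bsub>H\<^esub>)"] xy by simp
  qed
  have img: "al ` carrier K = carrier K"
    using endo_inj_surj[OF finK _ inj] al_closed' by blast
  have "al \<in> Bij (carrier K)" using inj img
    by (simp add: Bij_def bij_betw_def al_def)
  then show ?thesis using hom by (simp add: auto_def)
qed

definition c :: "'h \<Rightarrow> 'k" where "c h = fst (th (\<one>\<^bsub>K\<^esub>, h))"
definition tau :: "'h \<Rightarrow> 'h" where "tau h = snd (th (\<one>\<^bsub>K\<^esub>, h))"

lemma th_1h: "h \<in> carrier H \<Longrightarrow> th (\<one>\<^bsub>K\<^esub>, h) = (c h, tau h)"
  by (simp add: c_def tau_def)

lemma c_closed: "h \<in> carrier H \<Longrightarrow> c h \<in> carrier K"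
  using th_closed[of "(\<one>\<^bsub>K\<^esub>, h)"] by (auto simp: c_def mem_Times_iff)

lemma tau_closed: "h \<in> carrier H \<Longrightarrow> tau h \<in> carrier H"
  using th_closed[of "(\<one>\<^bsub>K\<^esub>, h)"] by (auto simp: tau_def mem_Times_iff)

lemma th_xh: assumes x: "x \<in> carrier K" and h: "h \<in> carrier H"
  shows "th (x, h) = (al x \<otimes>\<^bsub>K\<^esub> c h, tau h)"
proof -
  have eq: "(x, h) = (x, \<one>\<^bsub>H\<^esub>) \<otimes>\<^bsub>G\<^esub> (\<one>\<^bsub>K\<^esub>, h)" using x h by (simp add: al_one)
  have "th (x, h) = th (x, \<one>\<^bsub>H\<^esub>) \<otimes>\<^bsub>G\<^esub> th (\<one>\<^bsub>K\<^esub>, h)"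
    by (subst eq, rule th_mult) (use x h in simp_all)
  then show ?thesis using x h th_x th_1h c_closed tau_closed by (simp add: al_one)
qed

lemma tau_rel: assumes h: "h \<in> carrier H" shows "rel al h (tau h)"
  unfolding rel_def
proof
  fix x assume x: "x \<in> carrier K"
  have eq: "(\<one>\<^bsub>K\<^esub>, h) \<otimes>\<^bsub>G\<^esub> (x, \<one>\<^bsub>H\<^esub>) = (phi h x, \<one>\<^bsub>H\<^esub>) \<otimes>\<^bsub>G\<^esub> (\<one>\<^bsub>K\<^esub>, h)"
    using x h by (simp add: al_one)
  have "th (\<one>\<^bsub>K\<^esub>, h) \<otimes>\<^bsub>G\<^esub> th (x, \<one>\<^bsub>H\<^esub>) = th ((\<one>\<^bsub>K\<^esub>, h) \<otimes>\<^bsub>G\<^esub> (x, \<one>\<^bsub>H\<^esub>))"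
    by (rule th_mult[symmetric]) (use x h in simp_all)
  also have "\<dots> = th ((phi h x, \<one>\<^bsub>H\<^esub>) \<otimes>\<^bsub>G\<^esub> (\<one>\<^bsub>K\<^esub>, h))" by (simp only: eq)
  also have "\<dots> = th (phi h x, \<one>\<^bsub>H\<^esub>) \<otimes>\<^bsub>G\<^esub> th (\<one>\<^bsub>K\<^esub>, h)"
    by (rule th_mult) (use x h in simp_all)
  finally have "th (\<one>\<^bsub>K\<^esub>, h) \<otimes>\<^bsub>G\<^esub> th (x, \<one>\<^bsub>H\<^esub>) = th (phi h x, \<one>\<^bsub>H\<^esub>) \<otimes>\<^bsub>G\<^esub> th (\<one>\<^bsub>K\<^esub>, h)" .
  then have "c h \<otimes>\<^bsub>K\<^esub> phi (tau h) (al x) = al (phi h x) \<otimes>\<^bsub>K\<^esub> phi \<one>\<^bsub>H\<^esub> (c h)"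
    using x h th_x th_1h by simp
  then have "c h \<otimes>\<^bsub>K\<^esub> phi (tau h) (al x) = c h \<otimes>\<^bsub>K\<^esub> al (phi h x)"
    using x h c_closed al_closed' KC.m_comm by (simp add: al_one)
  then show "phi (tau h) (al x) = al (phi h x)"
    using x h c_closed al_closed' tau_closed by simp
qed

lemma tau_c_mult: assumes h: "h1 \<in> carrier H" "h2 \<in> carrier H"
  shows "tau (h1 \<otimes>\<^bsub>H\<^esub> h2) = tau h1 \<otimes>\<^bsub>H\<^esub> tau h2
     \<and> c (h1 \<otimes>\<^bsub>H\<^esub> h2) = c h1 \<otimes>\<^bsub>K\<^esub> phi (tau h1) (c h2)"
proof -
  have eq: "(\<one>\<^bsub>K\<^esub>, h1 \<otimes>\<^bsub>H\<^esub> h2) = (\<one>\<^bsub>K\<^esub>, h1) \<otimes>\<^bsub>G\<^esub> (\<one>\<^bsub>K\<^esub>, h2)" using h by simp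
  have "th (\<one>\<^bsub>K\<^esub>, h1 \<otimes>\<^bsub>H\<^esub> h2) = th (\<one>\<^bsub>K\<^esub>, h1) \<otimes>\<^bsub>G\<^esub> th (\<one>\<^bsub>K\<^esub>, h2)"
    by (subst eq, rule th_mult) (use h in simp_all)
  then show ?thesis using h th_1h by simp
qed

lemma tau_inj: "inj_on tau (carrier H)"
proof (rule inj_onI)
  fix h1 h2 assume h: "h1 \<in> carrier H" "h2 \<in> carrier H" "tau h1 = tau h2"
  show "h1 = h2"
  proof (rule phi_eq_on[OF h(1,2)])
    fix x assume x: "x \<in> carrier K"
    have "al (phi h1 x) = al (phi h2 x)" using tau_rel[OF h(1)] tau_rel[OF h(2)] h(3) x
      by (simp add: rel_def)
    then show "phi h1 x = phi h2 x" using auto_inj[OF al_auto'] x h by simp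
  qed
qed

lemma tau_img: "tau ` carrier H = carrier H"
  using endo_inj_surj[OF finH _ tau_inj] tau_closed by blast

lemma al_Nz: "al \<in> Nz"
proof -
  have "\<forall>h\<in>carrier H. \<exists>h'\<in>carrier H. rel al h h'" using tau_rel tau_closed by blast
  moreover have "\<forall>h'\<in>carrier H. \<exists>h\<in>carrier H. rel al h h'" using tau_rel tau_img by force
  ultimately show ?thesis using Nz_iff al_auto' by blast
qed

lemma sig_al: "h \<in> carrier H \<Longrightarrow> sig al h = tau h"
  using sig_eq[OF al_Nz _ tau_closed tau_rel] by blast

definition S :: 'k where "S = finprod K c (carrier H)"

lemma c_Pi: "c \<in> carrier H \<rightarrow> carrier K" using c_closed by blast

lemma S_closed: "S \<in> carrier K" unfolding S_def using c_Pi by simp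

lemma S_eq: assumes h1: "h1 \<in> carrier H"
  shows "S = c h1 [^]\<^bsub>K\<^esub> nH \<otimes>\<^bsub>K\<^esub> phi (tau h1) S"
proof -
  have img: "(\<lambda>h2. h1 \<otimes>\<^bsub>H\<^esub> h2) ` carrier H = carrier H"
  proof
    show "(\<lambda>h2. h1 \<otimes>\<^bsub>H\<^esub> h2) ` carrier H \<subseteq> carrier H" using h1 by auto
    show "carrier H \<subseteq> (\<lambda>h2. h1 \<otimes>\<^bsub>H\<^esub> h2) ` carrier H"
    proof
      fix h assume h: "h \<in> carrier H"
      then have "h = h1 \<otimes>\<^bsub>H\<^esub> (inv\<^bsub>H\<^esub> h1 \<otimes>\<^bsub>H\<^esub> h)" using h1 by (simp add: H.m_assoc[symmetric])
      then show "h \<in> (\<lambda>h2. h1 \<otimes>\<^bsub>H\<^esub> h2) ` carrier H" using h h1 by blast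
    qed
  qed
  have inj: "inj_on (\<lambda>h2. h1 \<otimes>\<^bsub>H\<^esub> h2) (carrier H)"
    using h1 by (auto intro!: inj_onI)
  have "S = finprod K c ((\<lambda>h2. h1 \<otimes>\<^bsub>H\<^esub> h2) ` carrier H)" by (simp add: S_def img)
  also have "\<dots> = finprod K (\<lambda>h2. c (h1 \<otimes>\<^bsub>H\<^esub> h2)) (carrier H)"
    using KC.finprod_reindex[of c "\<lambda>h2. h1 \<otimes>\<^bsub>H\<^esub> h2" "carrier H"] img inj c_Pi by simp
  also have "\<dots> = finprod K (\<lambda>h2. c h1 \<otimes>\<^bsub>K\<^esub> phi (tau h1) (c h2)) (carrier H)"
    by (rule KC.finprod_cong') (use h1 tau_c_mult c_closed tau_closed in auto)
  also have "\<dots> = finprod K (\<lambda>h2. c h1) (carrier H) \<otimes>\<^bsub>K\<^esub> finprod K (\<lambda>h2. phi (tau h1) (c h2)) (carrier H)"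
    by (rule KC.finprod_multf) (use h1 c_closed tau_closed in auto)
  also have "\<dots> = c h1 [^]\<^bsub>K\<^esub> nH \<otimes>\<^bsub>K\<^esub> phi (tau h1) S"
    by (simp add: S_def KC.finprod_const[OF c_closed[OF h1]] phi_finprod[OF tau_closed[OF h1] c_Pi])
  finally show ?thesis .
qed

definition kk :: 'k where "kk = inv\<^bsub>K\<^esub> (S [^]\<^bsub>K\<^esub> mm)"

lemma kk_closed: "kk \<in> carrier K" using S_closed by (simp add: kk_def)

lemma c_cob: assumes h: "h \<in> carrier H"
  shows "c h = kk \<otimes>\<^bsub>K\<^esub> phi (tau h) (inv\<^bsub>K\<^esub> kk)"
proof -
  let ?u = "phi (tau h) S"
  have u: "?u \<in> carrier K" using h S_closed tau_closed by simp
  have ch: "c h \<in> carrier K" using c_closed h .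
  have "S \<otimes>\<^bsub>K\<^esub> inv\<^bsub>K\<^esub> ?u = (c h [^]\<^bsub>K\<^esub> nH \<otimes>\<^bsub>K\<^esub> ?u) \<otimes>\<^bsub>K\<^esub> inv\<^bsub>K\<^esub> ?u"
    using arg_cong[OF S_eq[OF h], where f="\<lambda>z. z \<otimes>\<^bsub>K\<^esub> inv\<^bsub>K\<^esub> ?u"] by simp
  also have "\<dots> = c h [^]\<^bsub>K\<^esub> nH \<otimes>\<^bsub>K\<^esub> (?u \<otimes>\<^bsub>K\<^esub> inv\<^bsub>K\<^esub> ?u)"
    using u ch by (simp only: K.m_assoc K.nat_pow_closed K.inv_closed)
  finally have cn: "c h [^]\<^bsub>K\<^esub> nH = S \<otimes>\<^bsub>K\<^esub> inv\<^bsub>K\<^esub> ?u" using u ch by (simp del: al_invK)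
  have "c h [^]\<^bsub>K\<^esub> (nH * mm) = (S \<otimes>\<^bsub>K\<^esub> inv\<^bsub>K\<^esub> ?u) [^]\<^bsub>K\<^esub> mm"
    using cn ch by (simp add: K.nat_pow_pow[symmetric])
  also have "\<dots> = S [^]\<^bsub>K\<^esub> mm \<otimes>\<^bsub>K\<^esub> inv\<^bsub>K\<^esub> (?u [^]\<^bsub>K\<^esub> mm)"
    using S_closed u by (simp add: KC.nat_pow_distrib K.nat_pow_inv)
  finally have e: "c h [^]\<^bsub>K\<^esub> (nH * mm) = S [^]\<^bsub>K\<^esub> mm \<otimes>\<^bsub>K\<^esub> inv\<^bsub>K\<^esub> (?u [^]\<^bsub>K\<^esub> mm)" .
  have "c h = inv\<^bsub>K\<^esub> (c h [^]\<^bsub>K\<^esub> (nH * mm))" using K_div[OF ch] .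
  also have "\<dots> = inv\<^bsub>K\<^esub> (S [^]\<^bsub>K\<^esub> mm) \<otimes>\<^bsub>K\<^esub> ?u [^]\<^bsub>K\<^esub> mm"
    unfolding e using S_closed u by (simp add: KC.inv_mult)
  also have "\<dots> = kk \<otimes>\<^bsub>K\<^esub> phi (tau h) (inv\<^bsub>K\<^esub> kk)"
    using S_closed h tau_closed by (simp add: kk_def)
  finally show ?thesis .
qed

lemma th_Psi: "th = Psi (kk, al)"
proof (rule ext)
  fix g show "th g = Psi (kk, al) g"
  proof (cases "g \<in> carrier G")
    case False then show ?thesis using th_ext Psi_out by simp
  next
    case True
    then obtain x h where g: "g = (x, h)" "x \<in> carrier K" "h \<in> carrier H" by auto
    have "th g = (al x \<otimes>\<^bsub>K\<^esub> (kk \<otimes>\<^bsub>K\<^esub> phi (tau h) (inv\<^bsub>K\<^esub> kk)), tau h)"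
      using th_xh g c_cob by simp
    also have "\<dots> = Psi (kk, al) g"
      using g sig_al kk_closed al_closed' tau_closed by (simp add: KC.m_ac)
    finally show ?thesis .
  qed
qed

end

context frob begin

lemma Psi_surj: "th \<in> auto G \<Longrightarrow> \<exists>p\<in>carrier K \<times> Nz. Psi p = th"
proof -
  assume t: "th \<in> auto G"
  interpret aut K H phi th by (intro aut.intro aut_axioms.intro frob_axioms t)
  show ?thesis
  proof (rule bexI[of _ "(kk, al)"])
    show "Psi (kk, al) = th" using th_Psi by simp
    show "(kk, al) \<in> carrier K \<times> Nz" using kk_closed al_Nz by simp
  qed
qed

lemma Psi_iso: "Psi \<in> iso TG.G (AutoGroup G)"
proof -
  have "Psi ` (carrier K \<times> Nz) = auto G"
    using Psi_surj Psi_auto by fastforce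
  then have "bij_betw Psi (carrier TG.G) (carrier (AutoGroup G))"
    using Psi_inj by (simp add: bij_betw_def)
  then show ?thesis using Psi_hom by (simp add: iso_def)
qed

lemma main: "AutoGroup G \<cong> TG.G \<and> subgroup (carrier K \<times> Nz) (holomorph K)"
proof
  have "TG.G \<cong> AutoGroup G" using Psi_iso by (rule is_isoI)
  then show "AutoGroup G \<cong> TG.G" using group.iso_sym[OF TG.G_group] by blast
  show "subgroup (carrier K \<times> Nz) (holomorph K)" by (rule holo_sub)
qed

end

theorem corollary3p4:
  fixes K :: "('k, 'a) monoid_scheme" and H :: "('h, 'b) monoid_scheme"
    and phi :: "'h \<Rightarrow> 'k \<Rightarrow> 'k"
  assumes "comm_group K" and "group H"
    and "finite (carrier K)" and "finite (carrier H)"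
    and "phi \<in> hom H (AutoGroup K)"
    and "frobenius_action K H phi"
  shows "(AutoGroup (semidirect_product K H phi) \<cong>
           semidirect_product K
             ((AutoGroup K)\<lparr>carrier := normalizer (AutoGroup K) (phi ` carrier H)\<rparr>) (\<lambda>a. a))
         \<and> subgroup (carrier K \<times> normalizer (AutoGroup K) (phi ` carrier H)) (holomorph K)"
proof -
  have gK: "group K" using assms(1) by (rule comm_group.axioms(2))
  interpret frob K H phi
    by (intro frob.intro sdp.intro sdp_axioms.intro frob_axioms.intro gK assms)
  show ?thesis using main .
qed

end
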